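(* For fixed nonnegative integers $r,s$, the quantity $$\frac{1}{n!}\sum_{\pi\in S_n}\mathrm{inv}(\pi)^r\,\mathrm{maj}(\pi)^s$$ is, for $n\ge1$, given by a polynomial in $n$ (with rational coefficients). Likewise, for fixed $r,s$, the factorial moment $FM(r,s)(n,i)$ defined below is given by a polynomial in $(n,i)$ for all $1\le i\le n$.
   Context: For a permutation $\pi=\pi_1\cdots\pi_n$ of $\{1,\dots,n\}$: $\mathrm{inv}(\pi)$ is the number of pairs $1\le i<j\le n$ with $\pi_i>\pi_j$, and $\mathrm{maj}(\pi)$ is the sum of all positions $i\in\{1,\dots,n-1\}$ with $\pi_i>\pi_{i+1}$. Let $z^{(k)}=z(z-1)\cdots(z-k+1)$ denote the falling factorial ($z^{(0)}=1$). For $1\le i\le n$ let $\mu_{n,i}=n-i+(n-1)(n-2)/4$ and $$FM(r,s)(n,i)=\frac{1}{(n-1)!}\sum_{\pi\in S_n,\ \pi_n=i}(\mathrm{inv}(\pi)-\mu_{n,i})^{(r)}(\mathrm{maj}(\pi)-\mu_{n,i})^{(s)} .$$ *)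

theory Defs
  imports "HOL-Combinatorics.Permutations" "HOL-Computational_Algebra.Polynomial"
begin

definition inv_num :: "nat \<Rightarrow> (nat \<Rightarrow> nat) \<Rightarrow> nat" where
  "inv_num n p = card {(i, j). 1 \<le> i \<and> i < j \<and> j \<le> n \<and> p i > p j}"

definition maj_num :: "nat \<Rightarrow> (nat \<Rightarrow> nat) \<Rightarrow> nat" where
  "maj_num n p = (\<Sum> i \<in> {i. 1 \<le> i \<and> i \<le> n - 1 \<and> p i > p (Suc i)}. i)"

definition falling :: "rat \<Rightarrow> nat \<Rightarrow> rat" where
  "falling z k = (\<Prod> j < k. (z - of_nat j))"

definition mu :: "nat \<Rightarrow> nat \<Rightarrow> rat" where
  "mu n i = of_nat n - of_nat i + (of_nat n - 1) * (of_nat n - 2) / 4"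

definition FM :: "nat \<Rightarrow> nat \<Rightarrow> nat \<Rightarrow> nat \<Rightarrow> rat" where
  "FM r s n i = (1 / of_nat (fact (n - 1))) *
     (\<Sum> p \<in> {p. p permutes {1..n} \<and> p n = i}.
        falling (of_nat (inv_num n p) - mu n i) r * falling (of_nat (maj_num n p) - mu n i) s)"

end

theory Submission
  imports Defs
begin



inductive ipoly :: "(rat \<Rightarrow> rat \<Rightarrow> rat) \<Rightarrow> bool" where
  ip_const: "ipoly (\<lambda>x y. c)"
| ip_mx: "ipoly f \<Longrightarrow> ipoly (\<lambda>x y. x * f x y)"
| ip_my: "ipoly f \<Longrightarrow> ipoly (\<lambda>x y. y * f x y)"
| ip_add: "ipoly f \<Longrightarrow> ipoly g \<Longrightarrow> ipoly (\<lambda>x y. f x y + g x y)"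

lemma ipoly_ext: "ipoly f \<Longrightarrow> (\<And>x y. f x y = g x y) \<Longrightarrow> ipoly g"
proof -
  assume "ipoly f" "\<And>x y. f x y = g x y"
  then have "f = g" by (intro ext)
  with \<open>ipoly f\<close> show ?thesis by simp
qed

lemma ipoly_x: "ipoly (\<lambda>x y. x)"
  using ip_mx[OF ip_const[of 1]] by simp

lemma ipoly_y: "ipoly (\<lambda>x y. y)"
  using ip_my[OF ip_const[of 1]] by simp



lemma ipoly_mult: "ipoly f \<Longrightarrow> ipoly g \<Longrightarrow> ipoly (\<lambda>x y. f x y * g x y)"
proof (induction f arbitrary: g rule: ipoly.induct)
  case (ip_const c)
  from ip_const show ?case
  proof (induction g rule: ipoly.induct)
    case (ip_const d) then show ?case using ipoly.ip_const[of "c*d"] by simp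
  next
    case (ip_mx f) 
    have "ipoly (\<lambda>x y. x * (c * f x y))" using ip_mx.IH by (rule ipoly.ip_mx)
    then show ?case by (rule ipoly_ext) (simp add: algebra_simps)
  next
    case (ip_my f)
    have "ipoly (\<lambda>x y. y * (c * f x y))" using ip_my.IH by (rule ipoly.ip_my)
    then show ?case by (rule ipoly_ext) (simp add: algebra_simps)
  next
    case (ip_add f g)
    have "ipoly (\<lambda>x y. c * f x y + c * g x y)" using ip_add.IH by (rule ipoly.ip_add)
    then show ?case by (rule ipoly_ext) (simp add: algebra_simps)
  qed
next
  case (ip_mx f) 
  have "ipoly (\<lambda>x y. x * (f x y * g x y))" using ip_mx.IH[OF ip_mx.prems] by (rule ipoly.ip_mx)
  then show ?case by (rule ipoly_ext) (simp add: algebra_simps)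
next
  case (ip_my f)
  have "ipoly (\<lambda>x y. y * (f x y * g x y))" using ip_my.IH[OF ip_my.prems] by (rule ipoly.ip_my)
  then show ?case by (rule ipoly_ext) (simp add: algebra_simps)
next
  case (ip_add f1 f2)
  have "ipoly (\<lambda>x y. f1 x y * g x y + f2 x y * g x y)"
    using ip_add.IH(1)[OF ip_add.prems] ip_add.IH(2)[OF ip_add.prems] by (rule ipoly.ip_add)
  then show ?case by (rule ipoly_ext) (simp add: algebra_simps)
qed

lemma ipoly_scale: "ipoly f \<Longrightarrow> ipoly (\<lambda>x y. c * f x y)"
  using ipoly_mult[OF ip_const] .

lemma ipoly_diff: "ipoly f \<Longrightarrow> ipoly g \<Longrightarrow> ipoly (\<lambda>x y. f x y - g x y)"
proof -
  assume "ipoly f" "ipoly g"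
  then have "ipoly (\<lambda>x y. f x y + (-1) * g x y)" by (intro ip_add ipoly_scale)
  then show ?thesis by (rule ipoly_ext) simp
qed

lemma ipoly_div: "ipoly f \<Longrightarrow> ipoly (\<lambda>x y. f x y / c)"
proof -
  assume "ipoly f"
  then have "ipoly (\<lambda>x y. (1/c) * f x y)" by (rule ipoly_scale)
  then show ?thesis by (rule ipoly_ext) simp
qed

lemma ipoly_pow: "ipoly f \<Longrightarrow> ipoly (\<lambda>x y. f x y ^ k)"
proof (induction k)
  case 0 then show ?case using ip_const[of 1] by simp
next
  case (Suc k)
  then have "ipoly (\<lambda>x y. f x y * f x y ^ k)" by (intro ipoly_mult) auto
  then show ?case by simp
qed

lemma ipoly_sum: "finite A \<Longrightarrow> (\<And>a. a \<in> A \<Longrightarrow> ipoly (F a)) \<Longrightarrow> ipoly (\<lambda>x y. \<Sum>a\<in>A. F a x y)"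
proof (induction A rule: finite_induct)
  case empty then show ?case using ip_const[of 0] by simp
next
  case (insert a A)
  then have "ipoly (\<lambda>x y. F a x y + (\<Sum>a\<in>A. F a x y))" by (intro ip_add) auto
  then show ?case using insert by simp
qed

lemma ipoly_comp: "ipoly f \<Longrightarrow> ipoly g \<Longrightarrow> ipoly h \<Longrightarrow> ipoly (\<lambda>x y. f (g x y) (h x y))"
proof (induction f rule: ipoly.induct)
  case (ip_const c) show ?case by (rule ipoly.ip_const)
next
  case (ip_mx f) then show ?case using ipoly_mult[of g] by auto
next
  case (ip_my f) then show ?case using ipoly_mult[of h] by auto
next
  case (ip_add f1 f2) then show ?case using ipoly.ip_add by auto
qed

lemma ipoly_zero_split: "ipoly f \<Longrightarrow> \<exists>g. ipoly g \<and> (\<forall>x y. f x y = f 0 y + x * g x y)"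
proof (induction f rule: ipoly.induct)
  case (ip_const c) show ?case by (intro exI[of _ "\<lambda>x y. 0"]) (auto intro: ipoly.ip_const)
next
  case (ip_mx f) then show ?case by (intro exI[of _ f]) auto
next
  case (ip_my f)
  then obtain g where g: "ipoly g" and e: "\<And>x y. f x y = f 0 y + x * g x y" by blast
  show ?case
  proof (intro exI[of _ "\<lambda>x y. y * g x y"] conjI allI)
    show "ipoly (\<lambda>x y. y * g x y)" using g by (rule ipoly.ip_my)
    fix x y
    have "y * f x y = y * (f 0 y + x * g x y)" by (subst e) (rule refl)
    then show "y * f x y = y * f 0 y + x * (y * g x y)" by (simp add: algebra_simps)
  qed
next
  case (ip_add f1 f2)
  then obtain g1 g2 where g: "ipoly g1" "ipoly g2" and e1: "\<And>x y. f1 x y = f1 0 y + x * g1 x y"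
    and e2: "\<And>x y. f2 x y = f2 0 y + x * g2 x y" by blast
  show ?case
  proof (intro exI[of _ "\<lambda>x y. g1 x y + g2 x y"] conjI allI)
    show "ipoly (\<lambda>x y. g1 x y + g2 x y)" using g by (rule ipoly.ip_add)
    fix x y
    have "f1 x y + f2 x y = (f1 0 y + x * g1 x y) + (f2 0 y + x * g2 x y)"
      by (subst e1, subst e2) (rule refl)
    then show "f1 x y + f2 x y = f1 0 y + f2 0 y + x * (g1 x y + g2 x y)" by (simp add: algebra_simps)
  qed
qed

lemma ipoly_to_poly: "ipoly f \<Longrightarrow> \<exists>P. \<forall>x. f x x = poly P x"
proof (induction f rule: ipoly.induct)
  case (ip_const c) show ?case by (intro exI[of _ "[:c:]"]) auto
next
  case (ip_mx f) then obtain P where "\<forall>x. f x x = poly P x" by blast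
  then show ?case by (intro exI[of _ "[:0,1:] * P"]) auto
next
  case (ip_my f) then obtain P where "\<forall>x. f x x = poly P x" by blast
  then show ?case by (intro exI[of _ "[:0,1:] * P"]) auto
next
  case (ip_add f1 f2) then obtain P1 P2 where "\<forall>x. f1 x x = poly P1 x" "\<forall>x. f2 x x = poly P2 x" by blast
  then show ?case by (intro exI[of _ "P1 + P2"]) auto
qed

lemma sum_pad: assumes "d \<le> (D::nat)" shows "(\<Sum>b\<le>D. if b \<le> d then g b else 0) = (\<Sum>b\<le>d. (g b :: rat))"
  using assms
proof (induction rule: dec_induct)
  case base then show ?case by simp
next
  case (step D) then show ?case by simp
qed

definition cf :: "(rat \<Rightarrow> rat \<Rightarrow> rat) \<Rightarrow> bool" where
  "cf f \<longleftrightarrow> (\<exists>d c. \<forall>x y. f x y = (\<Sum>a\<le>d. \<Sum>b\<le>d. c a b * x ^ a * y ^ b))"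

lemma cf_pad:
  fixes f :: "rat \<Rightarrow> rat \<Rightarrow> rat"
  assumes "\<forall>x y. f x y = (\<Sum>a\<le>d. \<Sum>b\<le>d. c a b * x ^ a * y ^ b)" "d \<le> (D::nat)"
  shows "\<forall>x y. f x y = (\<Sum>a\<le>D. \<Sum>b\<le>D. (if a \<le> d \<and> b \<le> d then c a b else 0) * x ^ a * y ^ b)"
proof (intro allI)
  fix x y
  have "(\<Sum>a\<le>D. \<Sum>b\<le>D. (if a \<le> d \<and> b \<le> d then c a b else 0) * x ^ a * y ^ b)
      = (\<Sum>a\<le>D. if a \<le> d then (\<Sum>b\<le>D. if b \<le> d then c a b * x ^ a * y ^ b else 0) else 0)"
  proof (intro sum.cong refl)
    fix a assume "a \<in> {..D}"
    show "(\<Sum>b\<le>D. (if a \<le> d \<and> b \<le> d then c a b else 0) * x ^ a * y ^ b) =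
      (if a \<le> d then \<Sum>b\<le>D. if b \<le> d then c a b * x ^ a * y ^ b else 0 else 0)"
    proof (cases "a \<le> d")
      case True then show ?thesis by (simp, intro sum.cong refl) auto
    qed simp
  qed
  also have "\<dots> = (\<Sum>a\<le>d. (\<Sum>b\<le>D. if b \<le> d then c a b * x ^ a * y ^ b else 0))"
    using assms(2) by (rule sum_pad)
  also have "\<dots> = (\<Sum>a\<le>d. \<Sum>b\<le>d. c a b * x ^ a * y ^ b)"
    using assms(2) by (intro sum.cong refl sum_pad)
  finally show "f x y = (\<Sum>a\<le>D. \<Sum>b\<le>D. (if a \<le> d \<and> b \<le> d then c a b else 0) * x ^ a * y ^ b)"
    using assms(1) by simp
qed

lemma ipoly_cf: "ipoly f \<Longrightarrow> cf f"
proof (induction f rule: ipoly.induct)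
  case (ip_const k)
  show ?case unfolding cf_def by (intro exI[of _ 0] exI[of _ "\<lambda>a b. k"]) simp
next
  case (ip_mx f)
  then obtain d c where h: "\<forall>x y. f x y = (\<Sum>a\<le>d. \<Sum>b\<le>d. c a b * x ^ a * y ^ b)"
    unfolding cf_def by blast
  show ?case unfolding cf_def
  proof (intro exI[of _ "Suc d"] exI[of _ "\<lambda>a b. if a = 0 \<or> b > d then 0 else c (a - 1) b"] allI)
    fix x y
    have i: "(\<Sum>b\<le>Suc d. (if a = 0 \<or> b > d then 0 else c (a - 1) b) * x ^ a * y ^ b)
     = (if a = 0 then 0 else (\<Sum>b\<le>d. c (a - 1) b * x ^ a * y ^ b))" for a
      by (cases "a = 0") simp_all
    show "x * f x y = (\<Sum>a\<le>Suc d. \<Sum>b\<le>Suc d.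
      (if a = 0 \<or> b > d then 0 else c (a - 1) b) * x ^ a * y ^ b)"
      unfolding i h[rule_format] by (simp only: sum.atMost_Suc_shift) (simp add: sum_distrib_left mult_ac)
  qed
next
  case (ip_my f)
  then obtain d c where h: "\<forall>x y. f x y = (\<Sum>a\<le>d. \<Sum>b\<le>d. c a b * x ^ a * y ^ b)"
    unfolding cf_def by blast
  show ?case unfolding cf_def
  proof (intro exI[of _ "Suc d"] exI[of _ "\<lambda>a b. if b = 0 \<or> a > d then 0 else c a (b - 1)"] allI)
    fix x y
    have i: "(\<Sum>b\<le>Suc d. (if b = 0 \<or> a > d then 0 else c a (b - 1)) * x ^ a * y ^ b)
       = (if a > d then 0 else y * (\<Sum>b\<le>d. c a b * x ^ a * y ^ b))" for a
    proof (cases "a > d")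
      case False then show ?thesis
        by (simp add: sum.atMost_Suc_shift sum_distrib_left mult_ac del: sum.atMost_Suc)
    qed simp
    have o: "(\<Sum>a\<le>Suc d. (if a > d then 0 else g a)) = (\<Sum>a\<le>d. g a)" for g :: "nat \<Rightarrow> rat"
      by (simp add: sum.atMost_Suc)
    show "y * f x y = (\<Sum>a\<le>Suc d. \<Sum>b\<le>Suc d.
      (if b = 0 \<or> a > d then 0 else c a (b - 1)) * x ^ a * y ^ b)"
      unfolding i o h[rule_format] by (simp add: sum_distrib_left)
  qed
next
  case (ip_add f g)
  then obtain d1 c1 d2 c2 where h1: "\<forall>x y. f x y = (\<Sum>a\<le>d1. \<Sum>b\<le>d1. c1 a b * x ^ a * y ^ b)"
    and h2: "\<forall>x y. g x y = (\<Sum>a\<le>d2. \<Sum>b\<le>d2. c2 a b * x ^ a * y ^ b)"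
    unfolding cf_def by blast
  note p1 = cf_pad[OF h1, of "d1 + d2"] and p2 = cf_pad[OF h2, of "d1+d2"]
  show ?case unfolding cf_def
  proof (intro exI[of _ "d1 + d2"] exI[of _ "\<lambda>a b. (if a \<le> d1 \<and> b \<le> d1 then c1 a b else 0) + (if a \<le> d2 \<and> b \<le> d2 then c2 a b else 0)"] allI)
    fix x y
    have "f x y + g x y = (\<Sum>a\<le>d1+d2. \<Sum>b\<le>d1+d2. (if a \<le> d1 \<and> b \<le> d1 then c1 a b else 0) * x ^ a * y ^ b)
       + (\<Sum>a\<le>d1+d2. \<Sum>b\<le>d1+d2. (if a \<le> d2 \<and> b \<le> d2 then c2 a b else 0) * x ^ a * y ^ b)"
      using p1 p2 by simp
    also have "\<dots> = (\<Sum>a\<le>d1+d2. \<Sum>b\<le>d1+d2. ((if a \<le> d1 \<and> b \<le> d1 then c1 a b else 0) + (if a \<le> d2 \<and> b \<le> d2 then c2 a b else 0)) * x ^ a * y ^ b)"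
      by (simp only: sum.distrib[symmetric] distrib_right)
    finally show "f x y + g x y = \<dots>" .
  qed
qed


lemma binom_diff:
  "(1 + (j::rat)) ^ Suc b - j ^ Suc b = (\<Sum>k<Suc b. of_nat (Suc b choose k) * j ^ k)"
proof -
  have "(1 + j) ^ Suc b = (\<Sum>k\<le>Suc b. of_nat (Suc b choose k) * j ^ k * 1 ^ (Suc b - k))"
    using binomial_ring[of j 1 "Suc b"] by (simp add: add.commute)
  also have "\<dots> = (\<Sum>k<Suc b. of_nat (Suc b choose k) * j ^ k) + j ^ Suc b"
    by (simp add: lessThan_Suc_atMost[symmetric])
  finally show ?thesis by simp
qed

lemma powsum_identity:
  "(of_nat m :: rat) ^ Suc b = (\<Sum>k<b. of_nat (Suc b choose k) * (\<Sum>j<m. of_nat j ^ k))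
     + of_nat (Suc b) * (\<Sum>j<m. of_nat j ^ b)"
proof -
  have "(of_nat m :: rat) ^ Suc b = (\<Sum>j<m. (of_nat (Suc j)) ^ Suc b - of_nat j ^ Suc b)"
    by (subst sum_lessThan_telescope) simp
  also have "\<dots> = (\<Sum>j<m. \<Sum>k<Suc b. of_nat (Suc b choose k) * (of_nat j :: rat) ^ k)"
    by (intro sum.cong refl) (simp only: of_nat_Suc binom_diff)
  also have "\<dots> = (\<Sum>k<Suc b. of_nat (Suc b choose k) * (\<Sum>j<m. (of_nat j :: rat) ^ k))"
    by (subst sum.swap) (simp add: sum_distrib_left)
  also have "\<dots> = (\<Sum>k<b. of_nat (Suc b choose k) * (\<Sum>j<m. of_nat j ^ k))
     + of_nat (Suc b) * (\<Sum>j<m. of_nat j ^ b)"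
    by simp
  finally show ?thesis .
qed

lemma powsum_ipoly: "\<exists>F. ipoly F \<and> (\<forall>x m. F x (of_nat m) = (\<Sum>j<m. (of_nat j :: rat) ^ b))"
proof (induction b rule: less_induct)
  case (less b)
  then have "\<forall>k\<in>{..<b}. \<exists>F. ipoly F \<and> (\<forall>x m. F x (of_nat m) = (\<Sum>j<m. (of_nat j :: rat) ^ k))"
    by blast
  then obtain Fs where Fs: "\<And>k. k \<in> {..<b} \<Longrightarrow> ipoly (Fs k)"
    "\<And>k x m. k \<in> {..<b} \<Longrightarrow> Fs k x (of_nat m) = (\<Sum>j<m. (of_nat j :: rat) ^ k)"
    by metis
  define F where "F = (\<lambda>x y. (y ^ Suc b - (\<Sum>k<b. of_nat (Suc b choose k) * Fs k x y)) / of_nat (Suc b))"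
  have "ipoly F" unfolding F_def
    by (intro ipoly_div ipoly_diff ipoly_pow ipoly_y ipoly_sum ipoly_scale Fs) auto
  moreover have "F x (of_nat m) = (\<Sum>j<m. (of_nat j :: rat) ^ b)" for x m
  proof -
    have "F x (of_nat m) = ((of_nat m) ^ Suc b - (\<Sum>k<b. of_nat (Suc b choose k) * (\<Sum>j<m. (of_nat j :: rat) ^ k))) / of_nat (Suc b)"
      unfolding F_def using Fs(2) by simp
    also have "\<dots> = (\<Sum>j<m. (of_nat j :: rat) ^ b)"
      unfolding powsum_identity[of m b] by (simp del: of_nat_Suc)
    finally show ?thesis .
  qed
  ultimately show ?case by blast
qed

lemma ipoly_sumw: "ipoly f \<Longrightarrow> \<forall>b. \<exists>F. ipoly F \<and> (\<forall>x m. F x (of_nat m) = (\<Sum>j<m. f x (of_nat j) * of_nat j ^ b))"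
proof (induction f rule: ipoly.induct)
  case (ip_const c)
  show ?case
  proof
    fix b
    obtain P where P: "ipoly P" "\<forall>x m. P x (of_nat m) = (\<Sum>j<m. (of_nat j :: rat) ^ b)"
      using powsum_ipoly by blast
    show "\<exists>F. ipoly F \<and> (\<forall>x m. F x (of_nat m) = (\<Sum>j<m. c * of_nat j ^ b))"
      by (intro exI[of _ "\<lambda>x y. c * P x y"] conjI ipoly_scale P(1)) (simp add: P(2) sum_distrib_left)
  qed
next
  case (ip_mx f)
  show ?case
  proof
    fix b
    obtain P where P: "ipoly P" "\<forall>x m. P x (of_nat m) = (\<Sum>j<m. f x (of_nat j) * of_nat j ^ b)"
      using ip_mx.IH by blast
    show "\<exists>F. ipoly F \<and> (\<forall>x m. F x (of_nat m) = (\<Sum>j<m. x * f x (of_nat j) * of_nat j ^ b))"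
      by (intro exI[of _ "\<lambda>x y. x * P x y"] conjI ipoly.ip_mx P(1)) (simp add: P(2) sum_distrib_left mult.assoc)
  qed
next
  case (ip_my f)
  show ?case
  proof
    fix b
    obtain P where P: "ipoly P" "\<forall>x m. P x (of_nat m) = (\<Sum>j<m. f x (of_nat j) * of_nat j ^ Suc b)"
      using ip_my.IH by blast
    show "\<exists>F. ipoly F \<and> (\<forall>x m. F x (of_nat m) = (\<Sum>j<m. of_nat j * f x (of_nat j) * of_nat j ^ b))"
      by (intro exI[of _ P] conjI P(1)) (simp add: P(2) mult_ac)
  qed
next
  case (ip_add f g)
  show ?case
  proof
    fix b
    obtain P where P: "ipoly P" "\<forall>x m. P x (of_nat m) = (\<Sum>j<m. f x (of_nat j) * of_nat j ^ b)"
      using ip_add.IH by blast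
    obtain Q where Q: "ipoly Q" "\<forall>x m. Q x (of_nat m) = (\<Sum>j<m. g x (of_nat j) * of_nat j ^ b)"
      using ip_add.IH by blast
    show "\<exists>F. ipoly F \<and> (\<forall>x m. F x (of_nat m) = (\<Sum>j<m. (f x (of_nat j) + g x (of_nat j)) * of_nat j ^ b))"
      by (intro exI[of _ "\<lambda>x y. P x y + Q x y"] conjI ipoly.ip_add P(1) Q(1))
         (simp add: P(2) Q(2) sum.distrib distrib_right)
  qed
qed

lemma ipoly_sumy: "ipoly f \<Longrightarrow> \<exists>F. ipoly F \<and> (\<forall>x m. F x (of_nat m) = (\<Sum>j<m. f x (of_nat j)))"
proof -
  assume "ipoly f"
  then obtain F where "ipoly F" "\<forall>x m. F x (of_nat m) = (\<Sum>j<m. f x (of_nat j) * of_nat j ^ 0)"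
    using ipoly_sumw[of f] by blast
  then show ?thesis by (intro exI[of _ F]) simp
qed



definition shiftv :: "nat \<Rightarrow> nat \<Rightarrow> nat" where
  "shiftv i v = (if i \<le> v then Suc v else v)"
definition unshiftv :: "nat \<Rightarrow> nat \<Rightarrow> nat" where
  "unshiftv i v = (if i < v then v - 1 else v)"
definition insp :: "nat \<Rightarrow> nat \<Rightarrow> (nat \<Rightarrow> nat) \<Rightarrow> nat \<Rightarrow> nat" where
  "insp m i \<sigma> k = (if k = Suc m then i else if k \<in> {1..m} then shiftv i (\<sigma> k) else k)"
definition stdp :: "nat \<Rightarrow> nat \<Rightarrow> (nat \<Rightarrow> nat) \<Rightarrow> nat \<Rightarrow> nat" where
  "stdp m i p k = (if k \<in> {1..m} then unshiftv i (p k) else k)"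

lemma shiftv_less: "shiftv i a < shiftv i b \<longleftrightarrow> a < b"
  unfolding shiftv_def by auto

lemma shiftv_ne: "shiftv i a \<noteq> i"
  unfolding shiftv_def by auto

lemma shiftv_gt: "i < shiftv i a \<longleftrightarrow> i \<le> a"
  unfolding shiftv_def by auto

lemma perm_facts:
  assumes "\<sigma> permutes {1..m}"
  shows "\<And>a b. \<sigma> a = \<sigma> b \<Longrightarrow> a = b" "\<And>k. k \<in> {1..m} \<Longrightarrow> \<sigma> k \<in> {1..m}"
    "\<And>k. k \<notin> {1..m} \<Longrightarrow> \<sigma> k = k"
proof -
  show "\<And>a b. \<sigma> a = \<sigma> b \<Longrightarrow> a = b" using permutes_inj[OF assms] unfolding inj_def by blast
  show "\<And>k. k \<in> {1..m} \<Longrightarrow> \<sigma> k \<in> {1..m}" using permutes_in_image[OF assms] by blast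
  show "\<And>k. k \<notin> {1..m} \<Longrightarrow> \<sigma> k = k" using permutes_not_in[OF assms] by blast
qed

lemma insp_val:
  "k \<in> {1..m} \<Longrightarrow> insp m i \<sigma> k = shiftv i (\<sigma> k)"
  "insp m i \<sigma> (Suc m) = i"
  "k \<notin> {1..Suc m} \<Longrightarrow> insp m i \<sigma> k = k"
  unfolding insp_def by auto

lemma insp_permutes:
  assumes s: "\<sigma> permutes {1..m}" and i: "1 \<le> i" "i \<le> Suc m"
  shows "insp m i \<sigma> permutes {1..Suc m}"
proof (rule inj_imp_permutes)
  note pf = perm_facts[OF s]
  have cases: "k = Suc m \<or> k \<in> {1..m}" if "k \<in> {1..Suc m}" for k using that by auto
  show "inj_on (insp m i \<sigma>) {1..Suc m}"
  proof (rule inj_onI)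
    fix a b assume ab: "a \<in> {1..Suc m}" "b \<in> {1..Suc m}" "insp m i \<sigma> a = insp m i \<sigma> b"
    from cases[OF ab(1)] cases[OF ab(2)] show "a = b"
    proof (elim disjE)
      assume "a = Suc m" "b = Suc m" then show ?thesis by simp
    next
      assume "a = Suc m" "b \<in> {1..m}"
      then have False using ab(3) insp_val(1,2) shiftv_ne by metis
      then show ?thesis ..
    next
      assume "a \<in> {1..m}" "b = Suc m"
      then have False using ab(3) insp_val(1,2) shiftv_ne by metis
      then show ?thesis ..
    next
      assume a: "a \<in> {1..m}" and b: "b \<in> {1..m}"
      then have "shiftv i (\<sigma> a) = shiftv i (\<sigma> b)" using ab(3) insp_val(1) by metis
      then have "\<sigma> a = \<sigma> b" using shiftv_less[of i "\<sigma> a" "\<sigma> b"] shiftv_less[of i "\<sigma> b" "\<sigma> a"]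
        by (metis linorder_neqE_nat less_irrefl)
      then show ?thesis by (rule pf(1))
    qed
  qed
  show "finite {1..Suc m}" by simp
  show "insp m i \<sigma> x \<in> {1..Suc m}" if "x \<in> {1..Suc m}" for x
  proof -
    from cases[OF that] show ?thesis
    proof
      assume "x = Suc m" then show ?thesis using i insp_val(2) by simp
    next
      assume x: "x \<in> {1..m}"
      then have "\<sigma> x \<in> {1..m}" by (rule pf(2))
      then show ?thesis using x insp_val(1) unfolding shiftv_def by auto
    qed
  qed
  show "insp m i \<sigma> x = x" if "x \<notin> {1..Suc m}" for x
    using that by (rule insp_val(3))
qed

lemma insp_last: "insp m i \<sigma> (Suc m) = i"
  by (simp add: insp_def)

lemma stdp_permutes:
  assumes p: "p permutes {1..Suc m}" and pl: "p (Suc m) = i"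
  shows "stdp m i p permutes {1..m}"
proof (rule inj_imp_permutes)
  note pf = perm_facts[OF p]
  have ne: "p k \<noteq> i" if "k \<in> {1..m}" for k
    using pf(1)[of k "Suc m"] that pl by auto
  show "inj_on (stdp m i p) {1..m}"
  proof (rule inj_onI)
    fix a b assume ab: "a \<in> {1..m}" "b \<in> {1..m}" "stdp m i p a = stdp m i p b"
    then have "unshiftv i (p a) = unshiftv i (p b)" by (simp add: stdp_def)
    moreover have "p a \<noteq> i" "p b \<noteq> i" using ne ab by auto
    moreover have "p a \<ge> 1" "p b \<ge> 1" using pf(2)[of a] pf(2)[of b] ab by auto
    ultimately have "p a = p b" unfolding unshiftv_def by (auto split: if_splits)
    then show "a = b" by (rule pf(1))
  qed
  show "finite {1..m}" by simp
  show "stdp m i p x \<in> {1..m}" if "x \<in> {1..m}" for x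
  proof -
    have "p x \<in> {1..Suc m}" "p x \<noteq> i" using pf(2)[of x] that ne by auto
    then show ?thesis using that pl pf(2)[of "Suc m"] by (auto simp: stdp_def unshiftv_def)
  qed
  show "stdp m i p x = x" if "x \<notin> {1..m}" for x
    using that by (auto simp: stdp_def)
qed

lemma stdp_insp:
  assumes s: "\<sigma> permutes {1..m}"
  shows "stdp m i (insp m i \<sigma>) = \<sigma>"
proof
  fix k
  show "stdp m i (insp m i \<sigma>) k = \<sigma> k"
    using perm_facts(3)[OF s, of k] by (auto simp: stdp_def insp_def shiftv_def unshiftv_def)
qed

lemma insp_stdp:
  assumes p: "p permutes {1..Suc m}" and pl: "p (Suc m) = i"
  shows "insp m i (stdp m i p) = p"
proof
  fix k
  note pf = perm_facts[OF p]
  show "insp m i (stdp m i p) k = p k"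
  proof (cases "k \<in> {1..m}")
    case True
    then have "p k \<noteq> i" using pf(1)[of k "Suc m"] pl by auto
    with True show ?thesis by (auto simp: stdp_def insp_def shiftv_def unshiftv_def)
  next
    case False
    then show ?thesis using pl pf(3)[of k] by (auto simp: insp_def)
  qed
qed


lemma inv_insp:
  assumes s: "\<sigma> permutes {1..m}" and i: "1 \<le> i" "i \<le> Suc m"
  shows "inv_num (Suc m) (insp m i \<sigma>) = inv_num m \<sigma> + (Suc m - i)"
proof -
  note pf = perm_facts[OF s]
  let ?p = "insp m i \<sigma>"
  define A where "A = {(a, b). 1 \<le> a \<and> a < b \<and> b \<le> m \<and> \<sigma> a > \<sigma> b}"
  define B where "B = {a. 1 \<le> a \<and> a \<le> m \<and> i \<le> \<sigma> a}"
  have eq: "{(a, b). 1 \<le> a \<and> a < b \<and> b \<le> Suc m \<and> ?p a > ?p b} = A \<union> (\<lambda>a. (a, Suc m)) ` B"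
  proof (intro set_eqI iffI)
    fix x assume "x \<in> {(a, b). 1 \<le> a \<and> a < b \<and> b \<le> Suc m \<and> ?p a > ?p b}"
    then obtain a b where x: "x = (a, b)" "1 \<le> a" "a < b" "b \<le> Suc m" "?p a > ?p b" by blast
    have a: "a \<in> {1..m}" using x by auto
    show "x \<in> A \<union> (\<lambda>a. (a, Suc m)) ` B"
    proof (cases "b = Suc m")
      case True
      then have "shiftv i (\<sigma> a) > i" using x(5) insp_val(1)[OF a] insp_val(2) by metis
      then have "a \<in> B" using a shiftv_gt unfolding B_def by auto
      then show ?thesis using x True by auto
    next
      case False
      then have b: "b \<in> {1..m}" using x by auto
      have "shiftv i (\<sigma> a) > shiftv i (\<sigma> b)" using x(5) insp_val(1)[OF a] insp_val(1)[OF b] by metis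
      then have "\<sigma> a > \<sigma> b" using shiftv_less by blast
      then show ?thesis using x b unfolding A_def by auto
    qed
  next
    fix x assume "x \<in> A \<union> (\<lambda>a. (a, Suc m)) ` B"
    then show "x \<in> {(a, b). 1 \<le> a \<and> a < b \<and> b \<le> Suc m \<and> ?p a > ?p b}"
    proof
      assume "x \<in> A"
      then obtain a b where x: "x = (a, b)" "1 \<le> a" "a < b" "b \<le> m" "\<sigma> a > \<sigma> b"
        unfolding A_def by blast
      have a: "a \<in> {1..m}" and b: "b \<in> {1..m}" using x by auto
      have "shiftv i (\<sigma> a) > shiftv i (\<sigma> b)" using x(5) shiftv_less by blast
      then have "?p a > ?p b" using insp_val(1)[OF a] insp_val(1)[OF b] by metis
      then show ?thesis using x by auto
    next
      assume "x \<in> (\<lambda>a. (a, Suc m)) ` B"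
      then obtain a where x: "x = (a, Suc m)" "a \<in> B" by blast
      have a: "a \<in> {1..m}" using x unfolding B_def by auto
      have "shiftv i (\<sigma> a) > i" using x(2) shiftv_gt unfolding B_def by auto
      then have "?p a > ?p (Suc m)" using insp_val(1)[OF a] insp_val(2) by metis
      then show ?thesis using x a by auto
    qed
  qed
  have finA: "finite A"
    by (rule finite_subset[of _ "{1..m} \<times> {1..m}"]) (auto simp: A_def)
  have finB: "finite B" by (rule finite_subset[of _ "{1..m}"]) (auto simp: B_def)
  have disj: "A \<inter> (\<lambda>a. (a, Suc m)) ` B = {}" unfolding A_def by auto
  have cB: "card B = Suc m - i"
  proof -
    have "\<sigma> ` B = {i..m}"
    proof (intro set_eqI iffI)
      fix v assume "v \<in> \<sigma> ` B"
      then obtain a where "a \<in> B" "v = \<sigma> a" by blast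
      then show "v \<in> {i..m}" using pf(2)[of a] unfolding B_def by auto
    next
      fix v assume v: "v \<in> {i..m}"
      then have "v \<in> {1..m}" using i by auto
      then have "v \<in> \<sigma> ` {1..m}" using permutes_image[OF s] by simp
      then obtain a where "a \<in> {1..m}" "v = \<sigma> a" by blast
      then show "v \<in> \<sigma> ` B" using v unfolding B_def by auto
    qed
    moreover have "inj_on \<sigma> B" using pf(1) by (auto intro: inj_onI)
    ultimately have "card B = card {i..m}" using card_image by metis
    then show ?thesis by simp
  qed
  have "inv_num (Suc m) ?p = card (A \<union> (\<lambda>a. (a, Suc m)) ` B)"
    unfolding inv_num_def eq by (rule refl)
  also have "\<dots> = card A + card ((\<lambda>a. (a, Suc m)) ` B)"
    using finA finB disj by (intro card_Un_disjoint) auto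
  also have "card ((\<lambda>a. (a, Suc m)) ` B) = card B"
    by (rule card_image) (auto intro: inj_onI)
  also have "card A = inv_num m \<sigma>" unfolding inv_num_def A_def by (rule refl)
  finally show ?thesis using cB by simp
qed

lemma maj_insp:
  assumes s: "\<sigma> permutes {1..m}" and i: "1 \<le> i" "i \<le> Suc m"
  shows "maj_num (Suc m) (insp m i \<sigma>) = maj_num m \<sigma> + (if i \<le> \<sigma> m then m else 0)"
proof -
  note pf = perm_facts[OF s]
  let ?p = "insp m i \<sigma>"
  define A where "A = {k. 1 \<le> k \<and> k \<le> m - 1 \<and> \<sigma> k > \<sigma> (Suc k)}"
  define B where "B = {k. k = m \<and> i \<le> \<sigma> m}"
  have m1: "m \<ge> 1" if "i \<le> \<sigma> m"
  proof (rule ccontr)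
    assume "\<not> m \<ge> 1" then have "m = 0" by simp
    then have "\<sigma> m = m" using pf(3)[of m] by simp
    then show False using that i \<open>m = 0\<close> by simp
  qed
  have eq: "{k. 1 \<le> k \<and> k \<le> Suc m - 1 \<and> ?p k > ?p (Suc k)} = A \<union> B"
  proof (intro set_eqI iffI)
    fix k assume "k \<in> {k. 1 \<le> k \<and> k \<le> Suc m - 1 \<and> ?p k > ?p (Suc k)}"
    then have k: "1 \<le> k" "k \<le> m" "?p k > ?p (Suc k)" by auto
    have ka: "k \<in> {1..m}" using k by auto
    show "k \<in> A \<union> B"
    proof (cases "k = m")
      case True
      then have "shiftv i (\<sigma> k) > i" using k(3) insp_val(1)[OF ka] insp_val(2) by metis
      then show ?thesis using True shiftv_gt unfolding B_def by auto
    next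
      case False
      then have kb: "Suc k \<in> {1..m}" using k by auto
      have "shiftv i (\<sigma> k) > shiftv i (\<sigma> (Suc k))" using k(3) insp_val(1)[OF ka] insp_val(1)[OF kb] by metis
      then have "\<sigma> k > \<sigma> (Suc k)" using shiftv_less by blast
      then show ?thesis using k False unfolding A_def by auto
    qed
  next
    fix k assume "k \<in> A \<union> B"
    then show "k \<in> {k. 1 \<le> k \<and> k \<le> Suc m - 1 \<and> ?p k > ?p (Suc k)}"
    proof
      assume "k \<in> A"
      then have k: "1 \<le> k" "k \<le> m - 1" "\<sigma> k > \<sigma> (Suc k)" unfolding A_def by auto
      have ka: "k \<in> {1..m}" and kb: "Suc k \<in> {1..m}" using k by auto
      have "shiftv i (\<sigma> k) > shiftv i (\<sigma> (Suc k))" using k(3) shiftv_less by blast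
      then have "?p k > ?p (Suc k)" using insp_val(1)[OF ka] insp_val(1)[OF kb] by metis
      then show ?thesis using k by auto
    next
      assume "k \<in> B"
      then have k: "k = m" "i \<le> \<sigma> m" unfolding B_def by auto
      have ka: "k \<in> {1..m}" using m1[OF k(2)] k by auto
      have "shiftv i (\<sigma> k) > i" using k shiftv_gt by auto
      then have "?p k > ?p (Suc k)" using insp_val(1)[OF ka] insp_val(2) k(1) by metis
      then show ?thesis using ka k by auto
    qed
  qed
  have finA: "finite A" by (rule finite_subset[of _ "{1..m}"]) (auto simp: A_def)
  have finB: "finite B" unfolding B_def by auto
  have disj: "A \<inter> B = {}" unfolding A_def B_def by auto
  have sB: "sum (\<lambda>k. k) B = (if i \<le> \<sigma> m then m else 0)"
    unfolding B_def by auto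
  have "maj_num (Suc m) ?p = sum (\<lambda>k. k) (A \<union> B)"
    unfolding maj_num_def eq by (rule refl)
  also have "\<dots> = sum (\<lambda>k. k) A + sum (\<lambda>k. k) B"
    using finA finB disj by (rule sum.union_disjoint)
  also have "sum (\<lambda>k. k) A = maj_num m \<sigma>" unfolding maj_num_def A_def by (rule refl)
  finally show ?thesis using sB by simp
qed

lemma sum_last:
  assumes i: "1 \<le> i" "i \<le> Suc m"
  shows "(\<Sum>p\<in>{p. p permutes {1..Suc m} \<and> p (Suc m) = i}. f (inv_num (Suc m) p) (maj_num (Suc m) p))
    = (\<Sum>\<sigma>\<in>{\<sigma>. \<sigma> permutes {1..m}}. f (inv_num m \<sigma> + (Suc m - i)) (maj_num m \<sigma> + (if i \<le> \<sigma> m then m else 0)))"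
proof (rule sum.reindex_bij_witness[of _ "stdp m i" "insp m i", symmetric])
  fix \<sigma> assume "\<sigma> \<in> {\<sigma>. \<sigma> permutes {1..m}}"
  then have s: "\<sigma> permutes {1..m}" by simp
  show "stdp m i (insp m i \<sigma>) = \<sigma>" using s by (rule stdp_insp)
  show "insp m i \<sigma> \<in> {p. p permutes {1..Suc m} \<and> p (Suc m) = i}"
    using insp_permutes[OF s i] insp_last by simp
  show "f (inv_num (Suc m) (insp m i \<sigma>)) (maj_num (Suc m) (insp m i \<sigma>)) =
    f (inv_num m \<sigma> + (Suc m - i)) (maj_num m \<sigma> + (if i \<le> \<sigma> m then m else 0))"
    using inv_insp[OF s i] maj_insp[OF s i] by simp
next
  fix p assume "p \<in> {p. p permutes {1..Suc m} \<and> p (Suc m) = i}"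
  then have p: "p permutes {1..Suc m}" "p (Suc m) = i" by auto
  show "insp m i (stdp m i p) = p" using p by (rule insp_stdp)
  show "stdp m i p \<in> {\<sigma>. \<sigma> permutes {1..m}}" using stdp_permutes[OF p] by simp
qed


definition GG :: "nat \<Rightarrow> nat \<Rightarrow> nat \<Rightarrow> nat \<Rightarrow> rat" where
  "GG r s n i = (\<Sum>p\<in>{p. p permutes {1..n} \<and> p n = i}. of_nat (inv_num n p) ^ r * of_nat (maj_num n p) ^ s)"
definition HH :: "nat \<Rightarrow> nat \<Rightarrow> nat \<Rightarrow> rat" where
  "HH r s n = (\<Sum>p\<in>{p. p permutes {1..n}}. of_nat (inv_num n p) ^ r * of_nat (maj_num n p) ^ s)"
definition KK :: "nat \<Rightarrow> nat \<Rightarrow> nat \<Rightarrow> nat \<Rightarrow> rat" where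
  "KK r s n i = (\<Sum>p\<in>{p. p permutes {1..n} \<and> i \<le> p n}. of_nat (inv_num n p) ^ r * of_nat (maj_num n p) ^ s)"

lemma sum_group_last:
  fixes n :: nat and h :: "(nat \<Rightarrow> nat) \<Rightarrow> rat"
  assumes "1 \<le> n" "A \<subseteq> {1..n}"
  shows "(\<Sum>p\<in>{p. p permutes {1..n} \<and> p n \<in> A}. h p) = (\<Sum>j\<in>A. \<Sum>p\<in>{p. p permutes {1..n} \<and> p n = j}. h p)"
proof -
  have fin: "finite {p. p permutes {1..n} \<and> p n \<in> A}"
    by (rule finite_subset[OF _ finite_permutations[OF finite_atLeastAtMost[of "1::nat" n]]]) auto
  have finA: "finite A" using assms(2) finite_subset by blast
  have "(\<Sum>p\<in>{p. p permutes {1..n} \<and> p n \<in> A}. h p) =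
     (\<Sum>j\<in>A. \<Sum>p\<in>{x. x \<in> {p. p permutes {1..n} \<and> p n \<in> A} \<and> x n = j}. h p)"
    using fin finA by (rule sum.group[symmetric]) blast
  also have "\<dots> = (\<Sum>j\<in>A. \<Sum>p\<in>{p. p permutes {1..n} \<and> p n = j}. h p)"
  proof (rule sum.cong[OF refl])
    fix j assume j: "j \<in> A"
    have "{x. x \<in> {p. p permutes {1..n} \<and> p n \<in> A} \<and> x n = j} = {p. p permutes {1..n} \<and> p n = j}"
      using j by blast
    then show "(\<Sum>p\<in>{x. x \<in> {p. p permutes {1..n} \<and> p n \<in> A} \<and> x n = j}. h p) =
       (\<Sum>p\<in>{p. p permutes {1..n} \<and> p n = j}. h p)" by (rule arg_cong)
  qed
  finally show ?thesis .
qed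

lemma HH_split:
  assumes "1 \<le> n"
  shows "HH r s n = (\<Sum>i\<in>{1..n}. GG r s n i)"
proof -
  have "{p. p permutes {1..n} \<and> p n \<in> {1..n}} = {p. p permutes {1..n}}"
  proof (intro set_eqI iffI)
    fix p assume "p \<in> {p. p permutes {1..n}}"
    then have "p permutes {1..n}" by simp
    moreover have "p n \<in> {1..n}" using permutes_in_image[OF calculation, of n] assms by simp
    ultimately show "p \<in> {p. p permutes {1..n} \<and> p n \<in> {1..n}}" by simp
  qed simp
  then have "HH r s n = (\<Sum>p\<in>{p. p permutes {1..n} \<and> p n \<in> {1..n}}. of_nat (inv_num n p) ^ r * of_nat (maj_num n p) ^ s)"
    unfolding HH_def by simp
  also have "\<dots> = (\<Sum>i\<in>{1..n}. GG r s n i)"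
    unfolding GG_def by (rule sum_group_last[OF assms order_refl])
  finally show ?thesis .
qed

lemma KK_split:
  assumes "1 \<le> m" "1 \<le> i"
  shows "KK r s m i = (\<Sum>j\<in>{i..m}. GG r s m j)"
proof -
  have "{p. p permutes {1..m} \<and> p m \<in> {i..m}} = {p. p permutes {1..m} \<and> i \<le> p m}"
  proof (intro set_eqI iffI)
    fix p assume "p \<in> {p. p permutes {1..m} \<and> i \<le> p m}"
    then have "p permutes {1..m}" "i \<le> p m" by simp_all
    moreover have "p m \<in> {1..m}" using permutes_in_image[OF calculation(1), of m] assms by simp
    ultimately show "p \<in> {p. p permutes {1..m} \<and> p m \<in> {i..m}}" by simp
  qed simp
  then have "KK r s m i = (\<Sum>p\<in>{p. p permutes {1..m} \<and> p m \<in> {i..m}}. of_nat (inv_num m p) ^ r * of_nat (maj_num m p) ^ s)"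
    unfolding KK_def by simp
  also have "\<dots> = (\<Sum>j\<in>{i..m}. GG r s m j)"
    unfolding GG_def by (rule sum_group_last[OF assms(1)]) (use assms in auto)
  finally show ?thesis .
qed

lemma HH_0: "HH r s 0 = 0 ^ r * 0 ^ s"
proof -
  have "{p. p permutes {1..(0::nat)}} = {id}" by simp
  moreover have "inv_num 0 id = 0"
  proof -
    have "{(a, b). 1 \<le> a \<and> a < b \<and> b \<le> (0::nat) \<and> id a > id b} = {}" by auto
    then show ?thesis unfolding inv_num_def by (simp only: card.empty)
  qed
  moreover have "maj_num 0 id = 0" unfolding maj_num_def by simp
  ultimately show ?thesis unfolding HH_def by simp
qed

lemma binom_split:
  "((Y::rat) + (if c then of_nat m else 0)) ^ s
     = Y ^ s + (if c then (\<Sum>b<s. of_nat (s choose b) * Y ^ b * of_nat m ^ (s - b)) else 0)"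
proof (cases c)
  case True
  have "(Y + of_nat m) ^ s = (\<Sum>b\<le>s. of_nat (s choose b) * Y ^ b * of_nat m ^ (s - b))"
    by (rule binomial_ring)
  also have "\<dots> = (\<Sum>b<s. of_nat (s choose b) * Y ^ b * of_nat m ^ (s - b)) + Y ^ s"
    by (simp add: lessThan_Suc_atMost[symmetric])
  finally show ?thesis using True by simp
qed simp

lemma GG_rec:
  assumes i: "1 \<le> i" "i \<le> Suc m"
  shows "GG r s (Suc m) i = (\<Sum>a\<le>r. of_nat (r choose a) * of_nat (Suc m - i) ^ (r - a) *
      (HH a s m + (\<Sum>b<s. of_nat (s choose b) * of_nat m ^ (s - b) * KK a b m i)))"
proof -
  let ?S = "{\<sigma>. \<sigma> permutes {1..m}}"
  let ?c = "of_nat (Suc m - i) :: rat"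
  have fin: "finite ?S" by (rule finite_permutations) simp
  have "GG r s (Suc m) i = (\<Sum>\<sigma>\<in>?S. of_nat (inv_num m \<sigma> + (Suc m - i)) ^ r *
       of_nat (maj_num m \<sigma> + (if i \<le> \<sigma> m then m else 0)) ^ s)"
    unfolding GG_def by (rule sum_last[OF i, where f = "\<lambda>u v. of_nat u ^ r * of_nat v ^ s"])
  also have "\<dots> = (\<Sum>\<sigma>\<in>?S. \<Sum>a\<le>r. of_nat (r choose a) * ?c ^ (r - a) *
      (of_nat (inv_num m \<sigma>) ^ a * of_nat (maj_num m \<sigma>) ^ s +
       (if i \<le> \<sigma> m then (\<Sum>b<s. of_nat (s choose b) * of_nat m ^ (s - b) *
           (of_nat (inv_num m \<sigma>) ^ a * of_nat (maj_num m \<sigma>) ^ b)) else 0)))"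
  proof (intro sum.cong refl)
    fix \<sigma>
    let ?X = "of_nat (inv_num m \<sigma>) :: rat" and ?Y = "of_nat (maj_num m \<sigma>) :: rat"
    have e1: "of_nat (inv_num m \<sigma> + (Suc m - i)) ^ r = (\<Sum>a\<le>r. of_nat (r choose a) * ?X ^ a * ?c ^ (r - a))"
      by (simp only: of_nat_add binomial_ring)
    have e2: "(of_nat (maj_num m \<sigma> + (if i \<le> \<sigma> m then m else 0)) :: rat) ^ s
       = ?Y ^ s + (if i \<le> \<sigma> m then (\<Sum>b<s. of_nat (s choose b) * ?Y ^ b * of_nat m ^ (s - b)) else 0)"
    proof -
      have ee: "(of_nat (maj_num m \<sigma> + (if i \<le> \<sigma> m then m else 0)) :: rat) = ?Y + (if i \<le> \<sigma> m then of_nat m else 0)"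
        by simp
      show ?thesis unfolding ee by (rule binom_split)
    qed
    show "of_nat (inv_num m \<sigma> + (Suc m - i)) ^ r * of_nat (maj_num m \<sigma> + (if i \<le> \<sigma> m then m else 0)) ^ s
      = (\<Sum>a\<le>r. of_nat (r choose a) * ?c ^ (r - a) *
      (?X ^ a * ?Y ^ s + (if i \<le> \<sigma> m then (\<Sum>b<s. of_nat (s choose b) * of_nat m ^ (s - b) *
           (?X ^ a * ?Y ^ b)) else 0)))"
      unfolding e1 e2 sum_distrib_right
      by (intro sum.cong refl) (simp add: sum_distrib_left algebra_simps)
  qed
  also have "\<dots> = (\<Sum>a\<le>r. of_nat (r choose a) * ?c ^ (r - a) *
      ((\<Sum>\<sigma>\<in>?S. of_nat (inv_num m \<sigma>) ^ a * of_nat (maj_num m \<sigma>) ^ s) +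
       (\<Sum>\<sigma>\<in>?S. if i \<le> \<sigma> m then (\<Sum>b<s. of_nat (s choose b) * of_nat m ^ (s - b) *
           (of_nat (inv_num m \<sigma>) ^ a * of_nat (maj_num m \<sigma>) ^ b)) else 0)))"
    by (subst sum.swap) (intro sum.cong refl, simp only: sum_distrib_left[symmetric] sum.distrib)
  also have "\<dots> = (\<Sum>a\<le>r. of_nat (r choose a) * ?c ^ (r - a) *
      (HH a s m + (\<Sum>b<s. of_nat (s choose b) * of_nat m ^ (s - b) * KK a b m i)))"
  proof (intro sum.cong refl arg_cong2[where f = "(*)"] arg_cong2[where f = "(+)"])
    fix a
    show "(\<Sum>\<sigma>\<in>?S. of_nat (inv_num m \<sigma>) ^ a * of_nat (maj_num m \<sigma>) ^ s) = HH a s m"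
      unfolding HH_def by (rule refl)
    have "(\<Sum>\<sigma>\<in>?S. if i \<le> \<sigma> m then (\<Sum>b<s. of_nat (s choose b) * of_nat m ^ (s - b) *
           (of_nat (inv_num m \<sigma>) ^ a * of_nat (maj_num m \<sigma>) ^ b)) else 0)
       = (\<Sum>\<sigma>\<in>{\<sigma>\<in>?S. i \<le> \<sigma> m}. (\<Sum>b<s. of_nat (s choose b) * of_nat m ^ (s - b) *
           (of_nat (inv_num m \<sigma>) ^ a * of_nat (maj_num m \<sigma>) ^ b)))"
      using fin by (rule sum.inter_filter[symmetric])
    also have "\<dots> = (\<Sum>b<s. of_nat (s choose b) * of_nat m ^ (s - b) * KK a b m i)"
      unfolding KK_def by (subst sum.swap) (simp add: sum_distrib_left)
    finally show "(\<Sum>\<sigma>\<in>?S. if i \<le> \<sigma> m then (\<Sum>b<s. of_nat (s choose b) * of_nat m ^ (s - b) *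
           (of_nat (inv_num m \<sigma>) ^ a * of_nat (maj_num m \<sigma>) ^ b)) else 0)
       = (\<Sum>b<s. of_nat (s choose b) * of_nat m ^ (s - b) * KK a b m i)" .
  qed
  finally show ?thesis by (simp only: of_nat_power)
qed




definition Hspec :: "nat \<Rightarrow> nat \<Rightarrow> bool" where
  "Hspec r s \<longleftrightarrow> (\<exists>H. ipoly H \<and> (\<forall>n. HH r s n / fact n = H (of_nat n) 0))"
definition Qspec :: "nat \<Rightarrow> nat \<Rightarrow> bool" where
  "Qspec r s \<longleftrightarrow> (\<exists>Q. ipoly Q \<and> (\<forall>n i. 1 \<le> i \<longrightarrow> i \<le> n \<longrightarrow> GG r s n i / fact (n - 1) = Q (of_nat n) (of_nat i)))"

lemma ipoly_eval_const2: "ipoly f \<Longrightarrow> ipoly (\<lambda>x y. f x c)"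
  using ipoly_comp[OF _ ipoly_x ip_const] by blast

lemma sum_split_at:
  assumes "i \<le> Suc m"
  shows "(\<Sum>j<Suc m. f j) = (\<Sum>j<i. f j) + (\<Sum>j\<in>{i..m}. (f j :: rat))"
proof -
  have "(\<Sum>j<i. f j) + (\<Sum>j\<in>{i..<Suc m}. f j) = (\<Sum>j\<in>{0..<Suc m}. f j)"
    unfolding atLeast0LessThan[symmetric] by (rule sum.atLeastLessThan_concat) (use assms in auto)
  moreover have e1: "{i..<Suc m} = {i..m}" and e2: "{0..<Suc m} = {..<Suc m}" by auto
  ultimately have "(\<Sum>j<i. f j) + (\<Sum>j\<in>{i..m}. f j) = (\<Sum>j<Suc m. f j)" by simp
  then show ?thesis by (rule sym)
qed

lemma W_lemma:
  assumes bs: "b < s" and q: "Qspec a b"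
  shows "\<exists>W. ipoly W \<and> (\<forall>m i. 1 \<le> i \<longrightarrow> i \<le> Suc m \<longrightarrow>
     of_nat m ^ (s - b) * KK a b m i / fact m = W (of_nat m) (of_nat i))"
proof -
  obtain Q where Q: "ipoly Q" "\<And>n i. 1 \<le> i \<Longrightarrow> i \<le> n \<Longrightarrow> GG a b n i / fact (n - 1) = Q (of_nat n) (of_nat i)"
    using q unfolding Qspec_def by blast
  obtain A where A: "ipoly A" "\<And>x k. A x (of_nat k) = (\<Sum>j<k. Q x (of_nat j))"
    using ipoly_sumy[OF Q(1)] by blast
  define W where "W x y = x ^ (s - b - 1) * (A x (x + 1) - A x y)" for x y
  have "ipoly W" unfolding W_def
    by (intro ipoly_mult ipoly_pow ipoly_x ipoly_diff A(1) ipoly_comp[OF A(1) ipoly_x] ip_add ip_const ipoly_y)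
  moreover have "of_nat m ^ (s - b) * KK a b m i / fact m = W (of_nat m) (of_nat i)"
    if i: "1 \<le> i" "i \<le> Suc m" for m i
  proof (cases "m = 0")
    case True
    then have "i = 1" using i by simp
    then show ?thesis using True bs unfolding W_def by simp
  next
    case False
    then have m1: "1 \<le> m" by simp
    have "KK a b m i = (\<Sum>j\<in>{i..m}. GG a b m j)" by (rule KK_split[OF m1 i(1)])
    also have "\<dots> = (\<Sum>j\<in>{i..m}. fact (m - 1) * Q (of_nat m) (of_nat j))"
    proof (rule sum.cong[OF refl])
      fix j assume "j \<in> {i..m}"
      then have "1 \<le> j" "j \<le> m" using i by auto
      then show "GG a b m j = fact (m - 1) * Q (of_nat m) (of_nat j)"
        using Q(2)[of j m] by (simp add: field_simps)
    qed
    also have "\<dots> = fact (m - 1) * (A (of_nat m) (of_nat m + 1) - A (of_nat m) (of_nat i))"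
    proof -
      have "A (of_nat m) (of_nat m + 1) = A (of_nat m) (of_nat (Suc m))" by (simp add: add.commute)
      also have "\<dots> = (\<Sum>j<i. Q (of_nat m) (of_nat j)) + (\<Sum>j\<in>{i..m}. Q (of_nat m) (of_nat j))"
        unfolding A(2) by (rule sum_split_at[OF i(2)])
      finally show ?thesis unfolding A(2) by (simp add: sum_distrib_left algebra_simps)
    qed
    finally have K: "KK a b m i = fact (m - 1) * (A (of_nat m) (of_nat m + 1) - A (of_nat m) (of_nat i))" .
    have fm: "(fact m :: rat) = of_nat m * fact (m - 1)" using m1 by (simp add: fact_reduce)
    have pw: "(of_nat m :: rat) ^ (s - b) = of_nat m * of_nat m ^ (s - b - 1)"
      using bs by (metis Suc_diff_Suc diff_Suc_1 minus_nat.diff_0 power_Suc zero_less_diff Suc_pred)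
    show ?thesis unfolding W_def K fm pw using m1 by (simp add: field_simps)
  qed
  ultimately show ?thesis by blast
qed


lemma main_step:
  assumes IQ: "\<And>a b. b < s \<Longrightarrow> Qspec a b" and IH: "\<And>a. a < r \<Longrightarrow> Hspec a s"
  shows "Hspec r s \<and> Qspec r s"
proof -
  have "\<forall>p. \<exists>W. snd p < s \<longrightarrow> ipoly W \<and> (\<forall>m i. 1 \<le> i \<longrightarrow> i \<le> Suc m \<longrightarrow>
     of_nat m ^ (s - snd p) * KK (fst p) (snd p) m i / fact m = W (of_nat m) (of_nat i))"
    using W_lemma IQ by blast
  from choice[OF this] obtain Wf0 where Wf0: "\<forall>p. snd p < s \<longrightarrow> ipoly (Wf0 p) \<and> (\<forall>m i. 1 \<le> i \<longrightarrow> i \<le> Suc m \<longrightarrow>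
     of_nat m ^ (s - snd p) * KK (fst p) (snd p) m i / fact m = Wf0 p (of_nat m) (of_nat i))" by blast
  define Wf where "Wf a b = Wf0 (a, b)" for a b
  have Wf_ip: "ipoly (Wf a b)" if "b < s" for a b using Wf0 that unfolding Wf_def by auto
  have Wf_eq: "of_nat m ^ (s - b) * KK a b m i / fact m = Wf a b (of_nat m) (of_nat i)"
    if "b < s" "1 \<le> i" "i \<le> Suc m" for a b m i using Wf0 that unfolding Wf_def by auto
  have "\<forall>a. \<exists>H. a < r \<longrightarrow> ipoly H \<and> (\<forall>n. HH a s n / fact n = H (of_nat n) 0)"
    using IH unfolding Hspec_def by blast
  from choice[OF this] obtain Hf where Hf: "\<forall>a. a < r \<longrightarrow> ipoly (Hf a) \<and> (\<forall>n. HH a s n / fact n = Hf a (of_nat n) 0)"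
    by blast
  have Hf_ip: "ipoly (Hf a)" if "a < r" for a using Hf that by auto
  have Hf_eq: "HH a s n / fact n = Hf a (of_nat n) 0" if "a < r" for a n using Hf that by auto

  define Lp where "Lp x y = (\<Sum>a<r. of_nat (r choose a) * (x + 1 - y) ^ (r - a) * Hf a x 0)
     + (\<Sum>a\<le>r. of_nat (r choose a) * (x + 1 - y) ^ (r - a) * (\<Sum>b<s. of_nat (s choose b) * Wf a b x y))"
    for x y :: rat
  have ip1: "ipoly (\<lambda>x y. x + 1 - y)" by (intro ipoly_diff ip_add ipoly_x ipoly_y ip_const)
  have Lp_ip: "ipoly Lp" unfolding Lp_def
    by (intro ip_add ipoly_sum ipoly_mult ipoly_pow ip1 ip_const ipoly_eval_const2 Hf_ip Wf_ip finite_lessThan finite_atMost) auto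

  have Qrel: "GG r s (Suc m) i / fact m = HH r s m / fact m + Lp (of_nat m) (of_nat i)"
    if i: "1 \<le> i" "i \<le> Suc m" for m i
  proof -
    let ?c = "of_nat (Suc m - i) :: rat"
    have c: "?c = of_nat m + 1 - of_nat i" using i by (simp add: of_nat_diff)
    have "GG r s (Suc m) i / fact m = (\<Sum>a\<le>r. of_nat (r choose a) * ?c ^ (r - a) *
      (HH a s m / fact m + (\<Sum>b<s. of_nat (s choose b) * (of_nat m ^ (s - b) * KK a b m i / fact m))))"
      unfolding GG_rec[OF i] sum_divide_distrib
      by (intro sum.cong refl) (simp only: sum_divide_distrib[symmetric] add_divide_distrib[symmetric] times_divide_eq_right mult.assoc)
    also have "\<dots> = (\<Sum>a\<le>r. of_nat (r choose a) * ?c ^ (r - a) * (HH a s m / fact m))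
       + (\<Sum>a\<le>r. of_nat (r choose a) * ?c ^ (r - a) * (\<Sum>b<s. of_nat (s choose b) * Wf a b (of_nat m) (of_nat i)))"
      by (simp add: Wf_eq[OF _ i] distrib_left sum.distrib)
    also have "(\<Sum>a\<le>r. of_nat (r choose a) * ?c ^ (r - a) * (HH a s m / fact m))
       = (\<Sum>a<r. of_nat (r choose a) * ?c ^ (r - a) * Hf a (of_nat m) 0) + HH r s m / fact m"
      by (simp add: lessThan_Suc_atMost[symmetric]) (rule sum.cong[OF refl], simp add: Hf_eq[symmetric])
    finally show ?thesis unfolding Lp_def c by simp
  qed

  have Hrel: "HH r s (Suc m) / fact (Suc m) = HH r s m / fact m + (\<Sum>i\<in>{1..Suc m}. Lp (of_nat m) (of_nat i)) / of_nat (Suc m)"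
    for m
  proof -
    have "HH r s (Suc m) / fact (Suc m) = (\<Sum>i\<in>{1..Suc m}. GG r s (Suc m) i / fact m) / of_nat (Suc m)"
    proof -
      have e: "HH r s (Suc m) = (\<Sum>i\<in>{1..Suc m}. GG r s (Suc m) i)" by (rule HH_split) simp
      have "HH r s (Suc m) / fact (Suc m) = ((\<Sum>i\<in>{1..Suc m}. GG r s (Suc m) i) / fact m) / of_nat (Suc m)"
        unfolding e fact_Suc by (simp only: divide_divide_eq_left mult.commute of_nat_fact)
      then show ?thesis by (simp only: sum_divide_distrib)
    qed
    also have "\<dots> = (\<Sum>i\<in>{1..Suc m}. HH r s m / fact m + Lp (of_nat m) (of_nat i)) / of_nat (Suc m)"
      by (intro arg_cong2[where f = "(/)"] sum.cong refl Qrel) auto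
    also have "\<dots> = HH r s m / fact m + (\<Sum>i\<in>{1..Suc m}. Lp (of_nat m) (of_nat i)) / of_nat (Suc m)"
      by (simp add: sum.distrib add_divide_distrib del: of_nat_Suc)
    finally show ?thesis .
  qed

  define Lp' where "Lp' x y = Lp (x - 1) (y + 1)" for x y
  have Lp'_ip: "ipoly Lp'" unfolding Lp'_def
    by (rule ipoly_comp[OF Lp_ip]) (intro ipoly_diff ip_add ipoly_x ipoly_y ip_const)+
  obtain Fs where Fs: "ipoly Fs" "\<And>x k. Fs x (of_nat k) = (\<Sum>j<k. Lp' x (of_nat j))"
    using ipoly_sumy[OF Lp'_ip] by blast
  define D where "D x y = Fs x x" for x y :: rat
  have D_ip: "ipoly D" unfolding D_def by (rule ipoly_comp[OF Fs(1) ipoly_x ipoly_x])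
  obtain g where g: "ipoly g" "\<And>x y. D x y = D 0 y + x * g x y"
    using ipoly_zero_split[OF D_ip] by blast
  have D0: "D 0 y = 0" for y unfolding D_def using Fs(2)[of 0 0] by simp
  have sumL: "(\<Sum>i\<in>{1..Suc m}. Lp (of_nat m) (of_nat i)) = of_nat (Suc m) * g (of_nat (Suc m)) (of_nat (Suc m))" for m
  proof -
    have "(\<Sum>i\<in>{1..Suc m}. Lp (of_nat m) (of_nat i)) = (\<Sum>k<Suc m. Lp (of_nat m) (of_nat (Suc k)))"
      unfolding One_nat_def by (rule sum.atLeast1_atMost_eq)
    also have "\<dots> = (\<Sum>k<Suc m. Lp' (of_nat (Suc m)) (of_nat k))"
      unfolding Lp'_def by (simp add: add.commute)
    also have "\<dots> = D (of_nat (Suc m)) (of_nat (Suc m))" unfolding D_def Fs(2) by (rule refl)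
    also have "\<dots> = of_nat (Suc m) * g (of_nat (Suc m)) (of_nat (Suc m))"
      using g(2)[of "of_nat (Suc m)" "of_nat (Suc m)"] D0[of "of_nat (Suc m)"] by simp
    finally show ?thesis .
  qed
  define h where "h n = HH r s n / fact n" for n
  have hstep: "h (Suc m) = h m + g (of_nat (Suc m)) (of_nat (Suc m))" for m
    unfolding h_def Hrel sumL by (simp del: of_nat_Suc)
  define E where "E x y = g (y + 1) (y + 1)" for x y :: rat
  have E_ip: "ipoly E" unfolding E_def
    by (rule ipoly_comp[OF g(1)]) (intro ip_add ipoly_y ip_const)+
  obtain Es where Es: "ipoly Es" "\<And>x k. Es x (of_nat k) = (\<Sum>j<k. E x (of_nat j))"
    using ipoly_sumy[OF E_ip] by blast
  have hform: "h n = h 0 + (\<Sum>k<n. E 0 (of_nat k))" for n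
  proof (induction n)
    case 0 then show ?case by simp
  next
    case (Suc n) then show ?case unfolding hstep E_def by (simp add: add.commute)
  qed
  define H where "H x y = h 0 + Es y x" for x y
  have H_ip: "ipoly H" unfolding H_def
    by (intro ip_add ip_const ipoly_comp[OF Es(1) ipoly_y ipoly_x])
  have H_eq: "HH r s n / fact n = H (of_nat n) 0" for n
    unfolding H_def Es(2) using hform[of n] unfolding h_def by simp
  have HS: "Hspec r s" unfolding Hspec_def using H_ip H_eq by blast
  define Q where "Q x y = H (x - 1) 0 + Lp (x - 1) y" for x y
  have Q_ip: "ipoly Q" unfolding Q_def
    by (intro ip_add ipoly_comp[OF H_ip] ipoly_comp[OF Lp_ip] ipoly_diff ipoly_x ipoly_y ip_const)
  have Q_eq: "GG r s n i / fact (n - 1) = Q (of_nat n) (of_nat i)" if "1 \<le> i" "i \<le> n" for n i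
  proof -
    have "n \<noteq> 0" using that by auto
    then obtain m where m: "n = Suc m" using not0_implies_Suc by blast
    show ?thesis unfolding m Q_def using Qrel[of i m] that m H_eq[of m] by simp
  qed
  have QS: "Qspec r s" unfolding Qspec_def using Q_ip Q_eq by blast
  show ?thesis using HS QS by blast
qed

lemma all_spec: "Hspec r s \<and> Qspec r s"
proof (induction s arbitrary: r rule: less_induct)
  case (less s)
  note IHs = less.IH
  show ?case
  proof (induction r rule: less_induct)
    case (less r)
    show ?case
    proof (rule main_step)
      show "Qspec a b" if "b < s" for a b using IHs[OF that] by blast
      show "Hspec a s" if "a < r" for a using less.IH[OF that] by blast
    qed
  qed
qed


lemma falling_poly: "\<exists>d c. \<forall>z. falling z k = (\<Sum>t\<le>d. c t * z ^ t)"
proof -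
  define P where "P = (\<Prod>j<k. [:- of_nat j, 1:] :: rat poly)"
  have "falling z k = poly P z" for z
    unfolding P_def falling_def poly_prod by simp
  then show ?thesis unfolding poly_altdef by blast
qed

lemma binom_pad:
  assumes "t \<le> d"
  shows "((X::rat) + Y) ^ t = (\<Sum>a\<le>d. of_nat (t choose a) * X ^ a * Y ^ (t - a))"
proof -
  have "(X + Y) ^ t = (\<Sum>a\<le>t. of_nat (t choose a) * X ^ a * Y ^ (t - a))" by (rule binomial_ring)
  also have "\<dots> = (\<Sum>a\<le>d. of_nat (t choose a) * X ^ a * Y ^ (t - a))"
    by (rule sum.mono_neutral_right[symmetric]) (use assms in auto)
  finally show ?thesis .
qed

lemma expand_shift:
  "(\<Sum>t\<le>d. c t * ((X::rat) - \<mu>) ^ t) = (\<Sum>a\<le>d. (\<Sum>t\<le>d. c t * of_nat (t choose a) * (- \<mu>) ^ (t - a)) * X ^ a)"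
proof -
  have "(\<Sum>t\<le>d. c t * (X - \<mu>) ^ t) = (\<Sum>t\<le>d. c t * (\<Sum>a\<le>d. of_nat (t choose a) * X ^ a * (- \<mu>) ^ (t - a)))"
  proof (rule sum.cong[OF refl])
    fix t assume "t \<in> {..d}"
    then have "(X + - \<mu>) ^ t = (\<Sum>a\<le>d. of_nat (t choose a) * X ^ a * (- \<mu>) ^ (t - a))"
      by (intro binom_pad) auto
    then show "c t * (X - \<mu>) ^ t = c t * (\<Sum>a\<le>d. of_nat (t choose a) * X ^ a * (- \<mu>) ^ (t - a))"
      by simp
  qed
  also have "\<dots> = (\<Sum>t\<le>d. \<Sum>a\<le>d. c t * of_nat (t choose a) * (- \<mu>) ^ (t - a) * X ^ a)"
    by (simp add: sum_distrib_left mult_ac)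
  also have "\<dots> = (\<Sum>a\<le>d. \<Sum>t\<le>d. c t * of_nat (t choose a) * (- \<mu>) ^ (t - a) * X ^ a)"
    by (rule sum.swap)
  also have "\<dots> = (\<Sum>a\<le>d. (\<Sum>t\<le>d. c t * of_nat (t choose a) * (- \<mu>) ^ (t - a)) * X ^ a)"
    by (simp add: sum_distrib_right)
  finally show ?thesis .
qed

theorem mainTheorem6:
  fixes r s :: nat
  shows "(\<exists> P :: rat poly. \<forall> n \<ge> 1.
            (1 / of_nat (fact n)) * (\<Sum> p \<in> {p. p permutes {1..n}}.
               of_nat (inv_num n p) ^ r * of_nat (maj_num n p) ^ s) = poly P (of_nat n))
       \<and> (\<exists> (d :: nat) (c :: nat \<Rightarrow> nat \<Rightarrow> rat). \<forall> n i. 1 \<le> i \<and> i \<le> n \<longrightarrow>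
            FM r s n i = (\<Sum> a \<le> d. \<Sum> b \<le> d. c a b * of_nat n ^ a * of_nat i ^ b))"
proof
  obtain H where H: "ipoly H" "\<And>n. HH r s n / fact n = H (of_nat n) 0"
    using all_spec[of r s] unfolding Hspec_def by blast
  have "ipoly (\<lambda>x y. H x 0)" by (rule ipoly_eval_const2[OF H(1)])
  then obtain P where P: "\<And>x. H x 0 = poly P x" using ipoly_to_poly by fastforce
  show "\<exists> P :: rat poly. \<forall> n \<ge> 1.
            (1 / of_nat (fact n)) * (\<Sum> p \<in> {p. p permutes {1..n}}.
               of_nat (inv_num n p) ^ r * of_nat (maj_num n p) ^ s) = poly P (of_nat n)"
  proof (intro exI[of _ P] allI impI)
    fix n :: nat
    have "(1 / of_nat (fact n)) * (\<Sum> p \<in> {p. p permutes {1..n}}.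
               of_nat (inv_num n p) ^ r * of_nat (maj_num n p) ^ s) = HH r s n / fact n"
      unfolding HH_def by simp
    then show "(1 / of_nat (fact n)) * (\<Sum> p \<in> {p. p permutes {1..n}}.
               of_nat (inv_num n p) ^ r * of_nat (maj_num n p) ^ s) = poly P (of_nat n)"
      using H(2) P by simp
  qed
next
  have "\<forall>p. \<exists>Q. ipoly Q \<and> (\<forall>n i. 1 \<le> i \<longrightarrow> i \<le> n \<longrightarrow> GG (fst p) (snd p) n i / fact (n - 1) = Q (of_nat n) (of_nat i))"
    using all_spec unfolding Qspec_def by blast
  from choice[OF this] obtain Q0 where Q0: "\<forall>p. ipoly (Q0 p) \<and> (\<forall>n i. 1 \<le> i \<longrightarrow> i \<le> n \<longrightarrow> GG (fst p) (snd p) n i / fact (n - 1) = Q0 p (of_nat n) (of_nat i))"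
    by blast
  define Qf where "Qf a b = Q0 (a, b)" for a b
  have Qf_ip: "ipoly (Qf a b)" for a b using Q0 unfolding Qf_def by auto
  have Qf_eq: "GG a b n i / fact (n - 1) = Qf a b (of_nat n) (of_nat i)" if "1 \<le> i" "i \<le> n" for a b n i
    using Q0 that unfolding Qf_def by auto
  obtain d1 c1 where c1: "\<And>z. falling z r = (\<Sum>t\<le>d1. c1 t * z ^ t)" using falling_poly by blast
  obtain d2 c2 where c2: "\<And>z. falling z s = (\<Sum>t\<le>d2. c2 t * z ^ t)" using falling_poly by blast
  define muf where "muf x y = x - y + (x - 1) * (x - 2) / 4" for x y :: rat
  have muf_ip: "ipoly muf" unfolding muf_def
    by (intro ip_add ipoly_diff ipoly_div ipoly_mult ipoly_x ipoly_y ip_const)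
  have mu_eq: "mu n i = muf (of_nat n) (of_nat i)" for n i unfolding mu_def muf_def by simp
  define af where "af a x y = (\<Sum>t\<le>d1. c1 t * of_nat (t choose a) * (- muf x y) ^ (t - a))" for a x y
  define bf where "bf b x y = (\<Sum>t\<le>d2. c2 t * of_nat (t choose b) * (- muf x y) ^ (t - b))" for b x y
  have nm: "ipoly (\<lambda>x y. - muf x y)"
    using ipoly_scale[OF muf_ip, of "-1"] by simp
  have af_ip: "ipoly (af a)" for a unfolding af_def
    by (intro ipoly_sum ipoly_mult ipoly_pow nm ip_const finite_atMost)
  have bf_ip: "ipoly (bf b)" for b unfolding bf_def
    by (intro ipoly_sum ipoly_mult ipoly_pow nm ip_const finite_atMost)
  define Phi where "Phi x y = (\<Sum>a\<le>d1. \<Sum>b\<le>d2. af a x y * bf b x y * Qf a b x y)" for x y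
  have Phi_ip: "ipoly Phi" unfolding Phi_def
    by (intro ipoly_sum ipoly_mult af_ip bf_ip Qf_ip finite_atMost)
  have FM_eq: "FM r s n i = Phi (of_nat n) (of_nat i)" if i: "1 \<le> i" "i \<le> n" for n i
  proof -
    let ?T = "{p. p permutes {1..n} \<and> p n = i}"
    let ?x = "of_nat n :: rat" and ?y = "of_nat i :: rat"
    have summand: "falling (of_nat (inv_num n p) - mu n i) r * falling (of_nat (maj_num n p) - mu n i) s
      = (\<Sum>a\<le>d1. \<Sum>b\<le>d2. af a ?x ?y * bf b ?x ?y * (of_nat (inv_num n p) ^ a * of_nat (maj_num n p) ^ b))" for p
    proof -
      have A: "falling (of_nat (inv_num n p) - mu n i) r = (\<Sum>a\<le>d1. af a ?x ?y * of_nat (inv_num n p) ^ a)"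
        unfolding c1 expand_shift af_def mu_eq by (rule refl)
      have B: "falling (of_nat (maj_num n p) - mu n i) s = (\<Sum>b\<le>d2. bf b ?x ?y * of_nat (maj_num n p) ^ b)"
        unfolding c2 expand_shift bf_def mu_eq by (rule refl)
      show ?thesis unfolding A B sum_product by (intro sum.cong refl) (simp add: mult_ac)
    qed
    have "FM r s n i = (1 / fact (n - 1)) * (\<Sum>p\<in>?T. \<Sum>a\<le>d1. \<Sum>b\<le>d2. af a ?x ?y * bf b ?x ?y * (of_nat (inv_num n p) ^ a * of_nat (maj_num n p) ^ b))"
      unfolding FM_def summand by simp
    also have "\<dots> = (1 / fact (n - 1)) * (\<Sum>a\<le>d1. \<Sum>b\<le>d2. af a ?x ?y * bf b ?x ?y * GG a b n i)"
    proof -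
      have "(\<Sum>p\<in>?T. \<Sum>a\<le>d1. \<Sum>b\<le>d2. af a ?x ?y * bf b ?x ?y * (of_nat (inv_num n p) ^ a * of_nat (maj_num n p) ^ b))
        = (\<Sum>a\<le>d1. \<Sum>p\<in>?T. \<Sum>b\<le>d2. af a ?x ?y * bf b ?x ?y * (of_nat (inv_num n p) ^ a * of_nat (maj_num n p) ^ b))"
        by (rule sum.swap)
      also have "\<dots> = (\<Sum>a\<le>d1. \<Sum>b\<le>d2. \<Sum>p\<in>?T. af a ?x ?y * bf b ?x ?y * (of_nat (inv_num n p) ^ a * of_nat (maj_num n p) ^ b))"
        by (intro sum.cong refl sum.swap)
      also have "\<dots> = (\<Sum>a\<le>d1. \<Sum>b\<le>d2. af a ?x ?y * bf b ?x ?y * GG a b n i)"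
        unfolding GG_def by (simp add: sum_distrib_left)
      finally show ?thesis by simp
    qed
    also have "\<dots> = (\<Sum>a\<le>d1. \<Sum>b\<le>d2. af a ?x ?y * bf b ?x ?y * (GG a b n i / fact (n - 1)))"
      by (simp add: sum_distrib_left mult_ac)
    also have "\<dots> = Phi ?x ?y"
      unfolding Phi_def using Qf_eq[OF i] by simp
    finally show ?thesis .
  qed
  obtain d c where dc: "\<And>x y. Phi x y = (\<Sum>a\<le>d. \<Sum>b\<le>d. c a b * x ^ a * y ^ b)"
    using ipoly_cf[OF Phi_ip] unfolding cf_def by blast
  show "\<exists> (d :: nat) (c :: nat \<Rightarrow> nat \<Rightarrow> rat). \<forall> n i. 1 \<le> i \<and> i \<le> n \<longrightarrow>
            FM r s n i = (\<Sum> a \<le> d. \<Sum> b \<le> d. c a b * of_nat n ^ a * of_nat i ^ b)"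
  proof (intro exI[of _ d] exI[of _ c] allI impI)
    fix n i :: nat assume "1 \<le> i \<and> i \<le> n"
    then show "FM r s n i = (\<Sum> a \<le> d. \<Sum> b \<le> d. c a b * of_nat n ^ a * of_nat i ^ b)"
      using FM_eq[of i n] dc by simp
  qed
qed


end
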